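(* For every $n\ge 1$, the burning number of the directed cycle $C_n$ on $n$ nodes is $\left\lceil \sqrt{2n+\tfrac14}-\tfrac12\right\rceil$.
   Context: Burning process on a digraph $D$: a sequence $(x_1,\ldots,x_b)$ of nodes is a burning sequence for $D$ if after $b$ steps of the following process every node of $D$ is burned; the $i$-th step consists of first burning all out-neighbours of all currently burned nodes, and then burning the node $x_i$. The burning number of $D$ is the length of a shortest burning sequence. Equivalently, with $N^+_k(v)$ the set of nodes reachable from $v$ by a directed path with at most $k$ arcs, the burning number is the least $b$ such that there are nodes $v_1,\ldots,v_b$ with $V(D)=\bigcup_{i=1}^b N^+_{i-1}(v_i)$. *)

theory Defs
  imports Complex_Main
begin

definition out_ball :: "'a rel \<Rightarrow> nat \<Rightarrow> 'a \<Rightarrow> 'a set" where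
  "out_ball A k v = {w. \<exists>j\<le>k. (v, w) \<in> A ^^ j}"

text \<open>Burning number: least b such that there are nodes v_1..v_b (here xs!0..xs!(b-1))
  with V the union of N^+_{i-1}(v_i).\<close>
definition burning_number :: "'a set \<Rightarrow> 'a rel \<Rightarrow> nat" where
  "burning_number V A =
     (LEAST b. \<exists>xs. length xs = b \<and> set xs \<subseteq> V \<and> V = (\<Union>i<b. out_ball A i (xs ! i)))"

definition dcycle_arcs :: "nat \<Rightarrow> nat rel" where
  "dcycle_arcs n = {(i, Suc i mod n) | i. i < n}"

end

theory Submission
  imports Defs
begin

definition T :: "nat \<Rightarrow> nat" where "T b = (\<Sum>k<b. Suc k)"

lemma T_Suc[simp]: "T (Suc b) = T b + Suc b" by (simp add: T_def)
lemma T_0[simp]: "T 0 = 0" by (simp add: T_def)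
lemma T2: "2 * T b = b * (b + 1)" by (induction b) auto
lemma T_ge: "b \<le> T b" by (induction b) auto

lemma pow_arcs:
  assumes "v < n"
  shows "(v, w) \<in> dcycle_arcs n ^^ j \<longleftrightarrow> w = (v + j) mod n"
proof (induction j arbitrary: w)
  case 0
  then show ?case using assms by auto
next
  case (Suc j)
  have "(v, w) \<in> dcycle_arcs n ^^ Suc j \<longleftrightarrow> (\<exists>u. (v,u) \<in> dcycle_arcs n ^^ j \<and> (u,w) \<in> dcycle_arcs n)"
    by auto
  also have "\<dots> \<longleftrightarrow> (\<exists>u. u = (v + j) mod n \<and> (u,w) \<in> dcycle_arcs n)" using Suc by auto
  also have "\<dots> \<longleftrightarrow> w = Suc ((v + j) mod n) mod n" using assms by (auto simp: dcycle_arcs_def)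
  also have "Suc ((v + j) mod n) mod n = (v + Suc j) mod n" by (simp add: mod_Suc_eq)
  finally show ?case .
qed

lemma out_ball_eq:
  assumes "v < n"
  shows "out_ball (dcycle_arcs n) k v = (\<lambda>j. (v + j) mod n) ` {..k}"
  using pow_arcs[OF assms] by (auto simp: out_ball_def)

lemma lower:
  assumes "length xs = b" "set xs \<subseteq> {..<n}" "{..<n} = (\<Union>i<b. out_ball (dcycle_arcs n) i (xs ! i))"
  shows "n \<le> T b"
proof -
  have "n = card (\<Union>i<b. out_ball (dcycle_arcs n) i (xs ! i))" using assms(3)
    by (metis card_lessThan)
  also have "\<dots> \<le> (\<Sum>i<b. card (out_ball (dcycle_arcs n) i (xs ! i)))"
    by (rule card_UN_le) simp
  also have "\<dots> \<le> (\<Sum>i<b. Suc i)"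
  proof (rule sum_mono)
    fix i assume "i \<in> {..<b}"
    then have "xs ! i < n" using assms(1,2) nth_mem by fastforce
    then have "card (out_ball (dcycle_arcs n) i (xs ! i)) \<le> card {..i}"
      unfolding out_ball_eq[OF \<open>xs ! i < n\<close>] using card_image_le[OF finite_atMost] by blast
    then show "card (out_ball (dcycle_arcs n) i (xs ! i)) \<le> Suc i" by simp
  qed
  finally show ?thesis by (simp add: T_def)
qed

lemma decomp: "m < T b \<Longrightarrow> \<exists>i<b. \<exists>j\<le>i. m = T i + j"
proof (induction b)
  case 0 then show ?case by simp
next
  case (Suc b)
  show ?case
  proof (cases "m < T b")
    case True then show ?thesis using Suc.IH by (meson less_SucI)
  next
    case False
    then show ?thesis using Suc.prems by (intro exI[of _ b]) (auto intro!: exI[of _ "m - T b"])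
  qed
qed

lemma upper:
  assumes "n \<ge> 1" "n \<le> T b"
  shows "\<exists>xs. length xs = b \<and> set xs \<subseteq> {..<n} \<and> {..<n} = (\<Union>i<b. out_ball (dcycle_arcs n) i (xs ! i))"
proof -
  define xs where "xs = map (\<lambda>i. T i mod n) [0..<b]"
  have len: "length xs = b" by (simp add: xs_def)
  have set: "set xs \<subseteq> {..<n}" using assms(1) by (auto simp: xs_def)
  have "{..<n} = (\<Union>i<b. out_ball (dcycle_arcs n) i (xs ! i))"
  proof
    show "(\<Union>i<b. out_ball (dcycle_arcs n) i (xs ! i)) \<subseteq> {..<n}"
    proof
      fix x assume "x \<in> (\<Union>i<b. out_ball (dcycle_arcs n) i (xs ! i))"
      then obtain i where "i < b" "x \<in> out_ball (dcycle_arcs n) i (xs ! i)" by blast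
      moreover have "xs ! i < n" using \<open>i < b\<close> set len nth_mem by fastforce
      ultimately show "x \<in> {..<n}" using assms(1) by (auto simp: out_ball_eq)
    qed
  next
    show "{..<n} \<subseteq> (\<Union>i<b. out_ball (dcycle_arcs n) i (xs ! i))"
    proof
      fix m assume "m \<in> {..<n}"
      then have m: "m < n" by simp
      then obtain i j where ij: "i < b" "j \<le> i" "m = T i + j" using decomp assms(2)
        by (metis less_le_trans)
      have xi: "xs ! i = T i mod n" using ij(1) by (simp add: xs_def)
      have "xs ! i < n" using xi assms(1) by simp
      moreover have "m = (T i mod n + j) mod n" using ij(3) m by (simp add: mod_add_left_eq)
      ultimately have "m \<in> out_ball (dcycle_arcs n) i (xs ! i)"
        using ij(2) xi by (subst out_ball_eq) auto
      then show "m \<in> (\<Union>i<b. out_ball (dcycle_arcs n) i (xs ! i))" using ij(1) by blast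
    qed
  qed
  then show ?thesis using len set by blast
qed

theorem mainTheorem6:
  fixes n :: nat
  assumes "n \<ge> 1"
  shows "int (burning_number {..<n} (dcycle_arcs n)) = \<lceil>sqrt (2 * real n + 1/4) - 1/2\<rceil>"
proof -
  have eq: "burning_number {..<n} (dcycle_arcs n) = (LEAST b. n \<le> T b)"
    unfolding burning_number_def using lower upper[OF assms] by metis
  define b where "b = (LEAST b. n \<le> T b)"
  have hb: "n \<le> T b" unfolding b_def by (rule LeastI[of _ n]) (rule T_ge)
  have b0: "b \<noteq> 0" using hb assms by (cases b) auto
  have hb1: "\<not> n \<le> T (b - 1)" unfolding b_def by (rule not_less_Least) (use b0 b_def in auto)
  have r1: "2 * real n \<le> real b * (real b + 1)"
  proof -
    have "2 * n \<le> b * (b + 1)" using hb T2[of b] by linarith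
    then show ?thesis by (metis of_nat_1 of_nat_add of_nat_le_iff of_nat_mult of_nat_numeral)
  qed
  have r2: "real (b - 1) * real b < 2 * real n"
  proof -
    have "2 * T (b - 1) = (b - 1) * b" using T2[of "b-1"] b0 by simp
    then have "(b - 1) * b < 2 * n" using hb1 by linarith
    then show ?thesis by (metis of_nat_less_iff of_nat_mult of_nat_numeral)
  qed
  have rb: "real (b - 1) = real b - 1" using b0 by (simp add: of_nat_diff)
  have s1: "sqrt (2 * real n + 1/4) \<le> real b + 1/2"
  proof -
    have "2 * real n + 1/4 \<le> (real b + 1/2)^2" using r1 by (simp add: power2_eq_square algebra_simps)
    then have "sqrt (2 * real n + 1/4) \<le> sqrt ((real b + 1/2)^2)" by (rule real_sqrt_le_mono)
    then show ?thesis by simp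
  qed
  have s2: "real b - 1/2 < sqrt (2 * real n + 1/4)"
  proof -
    have "(real b - 1/2)^2 < 2 * real n + 1/4" using r2 rb by (simp add: power2_eq_square algebra_simps)
    then have "sqrt ((real b - 1/2)^2) < sqrt (2 * real n + 1/4)" by (rule real_sqrt_less_mono)
    moreover have "real b - 1/2 \<ge> 0" using b0 by simp
    ultimately show ?thesis by simp
  qed
  have "\<lceil>sqrt (2 * real n + 1/4) - 1/2\<rceil> = int b"
    using s1 s2 by (subst ceiling_eq_iff) auto
  then show ?thesis using eq b_def by simp
qed

end
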